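(* Let $s_2=s_2(z)$ be the formal power series \[ s_2=\frac{1+z-z^{2}-\sqrt{1-2z-z^{2}-2z^{3}+z^{4}}}{2z}, \] where the square root is the power series with constant term $1$ (so $s_2=1+z^2+z^3+2z^4+\cdots$). For $k\ge 0$ let $f_k(z)$ and $g_k(z)$ be the generating functions (in the variable $z$ marking the number of steps) of partial Dyck paths with air pockets ending at level $k$ whose last step is an up-step or that are empty (for $f_k$), respectively whose last step is a down-step (for $g_k$). Then for all $k\ge 0$, \[ f_k=z^{k}s_2^{k},\qquad g_k=z^k\bigl(s_2^{k+1}-s_2^{k}\bigr). \] In particular, $f_k+g_k=z^ks_2^{k+1}$ is the generating function of partial Dyck paths with air pockets ending at level $k$.
   Context: A partial Dyck path with air pockets is a lattice path starting at $(0,0)$, using up-steps $(1,1)$ and down-steps $(1,-j)$ for any integer $j\ge1$, never going below the $x$-axis, such that no two down-steps are consecutive; it may end at any level $k\ge0$ (the height of its endpoint). Equivalently, $f_k,g_k$ are the unique formal power series in $z$ satisfying $f_0=1$, $f_k=zf_{k-1}+zg_{k-1}$ for $k\ge1$, and $g_k=z\sum_{j>k}f_j$ for $k\ge0$. *)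

theory Defs
  imports "HOL-Computational_Algebra.Formal_Power_Series"
begin

text \<open>A path is encoded as the list of its vertical increments: an up-step (1,1) is 1,
  a down-step (1,-j) with j \<ge> 1 is the negative integer -j.\<close>

definition air_path :: "int list \<Rightarrow> bool" where
  "air_path p \<longleftrightarrow>
     (\<forall>x \<in> set p. x = 1 \<or> x \<le> -1) \<and>
     (\<forall>i \<le> length p. sum_list (take i p) \<ge> 0) \<and>
     (\<forall>i. Suc i < length p \<longrightarrow> \<not> (p ! i < 0 \<and> p ! Suc i < 0))"

definition f_gf :: "nat \<Rightarrow> real fps" where
  "f_gf k = Abs_fps (\<lambda>n. of_nat (card {p. air_path p \<and> length p = n \<and> sum_list p = int k
                                        \<and> (p = [] \<or> last p = 1)}))"

definition g_gf :: "nat \<Rightarrow> real fps" where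
  "g_gf k = Abs_fps (\<lambda>n. of_nat (card {p. air_path p \<and> length p = n \<and> sum_list p = int k
                                        \<and> p \<noteq> [] \<and> last p < 0}))"

definition all_gf :: "nat \<Rightarrow> real fps" where
  "all_gf k = Abs_fps (\<lambda>n. of_nat (card {p. air_path p \<and> length p = n \<and> sum_list p = int k}))"

definition disc :: "real fps" where
  "disc = 1 - 2 * fps_X - fps_X ^ 2 - 2 * fps_X ^ 3 + fps_X ^ 4"

definition sqrt_disc :: "real fps" where
  "sqrt_disc = (THE Q. fps_nth Q 0 = 1 \<and> Q ^ 2 = disc)"

definition s2 :: "real fps" where
  "s2 = (1 + fps_X - fps_X ^ 2 - sqrt_disc) / (2 * fps_X)"

end

theory Submission
  imports Defs
begin


lemma air_path_nil[simp]: "air_path []"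
  by (simp add: air_path_def)

lemma prefix_cond:
  "(\<forall>i \<le> length (p @ [x]). 0 \<le> sum_list (take i (p @ [x]))) \<longleftrightarrow>
   (\<forall>i \<le> length p. 0 \<le> sum_list (take i p)) \<and> 0 \<le> sum_list p + x"
proof
  assume H: "\<forall>i \<le> length (p @ [x]). 0 \<le> sum_list (take i (p @ [x]))"
  have "0 \<le> sum_list (take i p)" if "i \<le> length p" for i
    using H[rule_format, of i] that by simp
  moreover have "0 \<le> sum_list p + x" using H[rule_format, of "Suc (length p)"] by simp
  ultimately show "(\<forall>i \<le> length p. 0 \<le> sum_list (take i p)) \<and> 0 \<le> sum_list p + x" by blast
next
  assume H: "(\<forall>i \<le> length p. 0 \<le> sum_list (take i p)) \<and> 0 \<le> sum_list p + x"
  show "\<forall>i \<le> length (p @ [x]). 0 \<le> sum_list (take i (p @ [x]))"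
  proof (intro allI impI)
    fix i assume i: "i \<le> length (p @ [x])"
    show "0 \<le> sum_list (take i (p @ [x]))"
    proof (cases "i \<le> length p")
      case True thus ?thesis using H by simp
    next
      case False
      hence "i = Suc (length p)" using i by simp
      thus ?thesis using H by simp
    qed
  qed
qed

lemma adj_cond:
  "(\<forall>i. Suc i < length (p @ [x]) \<longrightarrow> \<not> ((p @ [x]) ! i < 0 \<and> (p @ [x]) ! Suc i < 0)) \<longleftrightarrow>
   (\<forall>i. Suc i < length p \<longrightarrow> \<not> (p ! i < 0 \<and> p ! Suc i < 0)) \<and> \<not> (p \<noteq> [] \<and> last p < 0 \<and> x < (0::int))"
proof
  assume H: "\<forall>i. Suc i < length (p @ [x]) \<longrightarrow> \<not> ((p @ [x]) ! i < 0 \<and> (p @ [x]) ! Suc i < 0)"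
  have "\<not> (p ! i < 0 \<and> p ! Suc i < 0)" if "Suc i < length p" for i
    using H[rule_format, of i] that by (simp add: nth_append)
  moreover have "\<not> (p \<noteq> [] \<and> last p < 0 \<and> x < 0)"
  proof
    assume a: "p \<noteq> [] \<and> last p < 0 \<and> x < 0"
    then obtain m where m: "length p = Suc m" by (cases p) auto
    have "last p = p ! m" using a m by (simp add: last_conv_nth)
    thus False using H[rule_format, of m] a m by (simp add: nth_append)
  qed
  ultimately show "(\<forall>i. Suc i < length p \<longrightarrow> \<not> (p ! i < 0 \<and> p ! Suc i < 0)) \<and> \<not> (p \<noteq> [] \<and> last p < 0 \<and> x < 0)"
    by blast
next
  assume H: "(\<forall>i. Suc i < length p \<longrightarrow> \<not> (p ! i < 0 \<and> p ! Suc i < 0)) \<and> \<not> (p \<noteq> [] \<and> last p < 0 \<and> x < (0::int))"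
  show "\<forall>i. Suc i < length (p @ [x]) \<longrightarrow> \<not> ((p @ [x]) ! i < 0 \<and> (p @ [x]) ! Suc i < 0)"
  proof (intro allI impI)
    fix i assume i: "Suc i < length (p @ [x])"
    show "\<not> ((p @ [x]) ! i < 0 \<and> (p @ [x]) ! Suc i < 0)"
    proof (cases "Suc i < length p")
      case True thus ?thesis using H by (simp add: nth_append)
    next
      case False
      hence li: "length p = Suc i" using i by simp
      hence "p \<noteq> []" by auto
      moreover have "last p = p ! i" using li \<open>p \<noteq> []\<close> by (simp add: last_conv_nth)
      ultimately show ?thesis using H li by (simp add: nth_append)
    qed
  qed
qed

lemma air_path_snoc:
  "air_path (p @ [x]) \<longleftrightarrow> air_path p \<and> (x = 1 \<or> x \<le> -1) \<and> 0 \<le> sum_list p + x \<and>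
     \<not> (p \<noteq> [] \<and> last p < 0 \<and> x < 0)"
  unfolding air_path_def prefix_cond adj_cond by auto

lemma air_path_sum_nonneg: "air_path p \<Longrightarrow> 0 \<le> sum_list p"
  unfolding air_path_def by (metis order_refl take_all)

lemma air_path_elem: "air_path p \<Longrightarrow> x \<in> set p \<Longrightarrow> x = 1 \<or> x \<le> -1"
  unfolding air_path_def by blast

lemma sum_le_len_aux: "(\<forall>x\<in>set p. x \<le> (1::int)) \<Longrightarrow> sum_list p \<le> int (length p)"
  by (induction p) auto

lemma air_path_sum_le: "air_path p \<Longrightarrow> sum_list p \<le> int (length p)"
  by (rule sum_le_len_aux) (auto dest: air_path_elem)

lemma finite_AP: "finite {p. air_path p \<and> length p = n}"
proof (induction n)
  case 0
  have "{p. air_path p \<and> length p = 0} \<subseteq> {[]}" by auto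
  thus ?case by (rule finite_subset) simp
next
  case (Suc n)
  have "{p. air_path p \<and> length p = Suc n} \<subseteq>
        (\<lambda>(p,x). p @ [x]) ` ({p. air_path p \<and> length p = n} \<times> {- int n..1})"
  proof
    fix q assume q: "q \<in> {p. air_path p \<and> length p = Suc n}"
    hence ne: "q \<noteq> []" by auto
    define p where "p = butlast q"
    define x where "x = last q"
    have qe: "q = p @ [x]" using ne by (simp add: p_def x_def)
    have ap: "air_path (p @ [x])" using q qe by simp
    have lp: "length p = n" using q by (simp add: p_def)
    have "x \<le> 1" using ap by (simp add: air_path_snoc) linarith
    moreover have "- int n \<le> x" using ap air_path_sum_le[of p] lp by (simp add: air_path_snoc)
    ultimately show "q \<in> (\<lambda>(p,x). p @ [x]) ` ({p. air_path p \<and> length p = n} \<times> {- int n..1})"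
      using qe ap lp by (auto simp: air_path_snoc)
  qed
  thus ?case by (rule finite_subset) (intro finite_imageI finite_cartesian_product Suc.IH finite_atLeastAtMost_int)
qed

definition FS :: "nat \<Rightarrow> nat \<Rightarrow> int list set" where
  "FS k n = {p. air_path p \<and> length p = n \<and> sum_list p = int k \<and> (p = [] \<or> last p = 1)}"
definition GS :: "nat \<Rightarrow> nat \<Rightarrow> int list set" where
  "GS k n = {p. air_path p \<and> length p = n \<and> sum_list p = int k \<and> p \<noteq> [] \<and> last p < 0}"
definition AS :: "nat \<Rightarrow> nat \<Rightarrow> int list set" where
  "AS k n = {p. air_path p \<and> length p = n \<and> sum_list p = int k}"

lemma fin_FS: "finite (FS k n)"
  by (rule finite_subset[OF _ finite_AP[of n]]) (auto simp: FS_def)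
lemma fin_GS: "finite (GS k n)"
  by (rule finite_subset[OF _ finite_AP[of n]]) (auto simp: GS_def)
lemma fin_AS: "finite (AS k n)"
  by (rule finite_subset[OF _ finite_AP[of n]]) (auto simp: AS_def)

lemma AS_split: "card (AS k n) = card (FS k n) + card (GS k n)"
proof -
  have "AS k n = FS k n \<union> GS k n"
  proof
    show "AS k n \<subseteq> FS k n \<union> GS k n"
    proof
      fix p assume p: "p \<in> AS k n"
      show "p \<in> FS k n \<union> GS k n"
      proof (cases "p = []")
        case True thus ?thesis using p by (auto simp: AS_def FS_def)
      next
        case False
        hence "last p = 1 \<or> last p \<le> -1" using p air_path_elem[of p "last p"] by (auto simp: AS_def)
        thus ?thesis using p False by (auto simp: AS_def FS_def GS_def)
      qed
    qed
  qed (auto simp: AS_def FS_def GS_def)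
  moreover have "FS k n \<inter> GS k n = {}" by (auto simp: FS_def GS_def)
  ultimately show ?thesis using fin_FS fin_GS by (simp add: card_Un_disjoint)
qed

lemma FS0: "FS 0 n = (if n = 0 then {[]} else {})"
proof -
  have "p = []" if "p \<in> FS 0 n" for p
  proof (rule ccontr)
    assume ne: "p \<noteq> []"
    hence l: "last p = 1" using that by (simp add: FS_def)
    have qe: "p = butlast p @ [1]" using ne l by (metis append_butlast_last_id)
    hence "air_path (butlast p @ [1])" using that by (simp add: FS_def)
    hence "0 \<le> sum_list (butlast p)" by (simp add: air_path_snoc air_path_sum_nonneg)
    moreover have "sum_list p = sum_list (butlast p) + 1" by (subst qe) simp
    ultimately show False using that by (simp add: FS_def)
  qed
  hence A: "FS 0 n \<subseteq> {[]}" by blast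
  have B: "[] \<in> FS 0 n \<longleftrightarrow> n = 0" by (simp add: FS_def)
  show ?thesis
  proof (cases "n = 0")
    case True
    have "FS 0 n = {[]}" using A B True by blast
    thus ?thesis using True by simp
  next
    case False
    have "FS 0 n = {}" using A B False by blast
    thus ?thesis using False by simp
  qed
qed

lemma FS1: "FS (Suc k) 0 = {}"
  by (auto simp: FS_def)

lemma FS2: "FS (Suc k) (Suc n) = (\<lambda>p. p @ [1]) ` AS k n"
proof
  show "FS (Suc k) (Suc n) \<subseteq> (\<lambda>p. p @ [1]) ` AS k n"
  proof
    fix q assume q: "q \<in> FS (Suc k) (Suc n)"
    hence ne: "q \<noteq> []" and l: "last q = 1" by (auto simp: FS_def)
    have qe: "q = butlast q @ [1]" using ne l by (metis append_butlast_last_id)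
    have "air_path (butlast q @ [1])" using q qe by (simp add: FS_def)
    moreover have "sum_list q = sum_list (butlast q) + 1" by (subst qe) simp
    ultimately have "butlast q \<in> AS k n" using q by (auto simp: AS_def FS_def air_path_snoc)
    thus "q \<in> (\<lambda>p. p @ [1]) ` AS k n" using qe by blast
  qed
next
  show "(\<lambda>p. p @ [1]) ` AS k n \<subseteq> FS (Suc k) (Suc n)"
    by (auto simp: AS_def FS_def air_path_snoc air_path_sum_nonneg)
qed

lemma card_FS2: "card (FS (Suc k) (Suc n)) = card (FS k n) + card (GS k n)"
proof -
  have "inj_on (\<lambda>p. p @ [1::int]) (AS k n)" by (auto intro: inj_onI)
  thus ?thesis by (simp add: FS2 card_image AS_split)
qed

lemma GS0: "GS k 0 = {}"
  by (auto simp: GS_def)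

lemma GS1: "GS k (Suc n) = (\<Union>j\<in>{k<..n+2}. (\<lambda>p. p @ [int k - int j]) ` FS j n)"
proof
  show "GS k (Suc n) \<subseteq> (\<Union>j\<in>{k<..n+2}. (\<lambda>p. p @ [int k - int j]) ` FS j n)"
  proof
    fix q assume q: "q \<in> GS k (Suc n)"
    hence ne: "q \<noteq> []" by (auto simp: GS_def)
    define p where "p = butlast q"
    define d where "d = last q"
    have qe: "q = p @ [d]" using ne by (simp add: p_def d_def)
    have d0: "d < 0" using q by (simp add: GS_def d_def)
    have ap: "air_path (p @ [d])" using q qe by (simp add: GS_def)
    have lp: "length p = n" using q by (simp add: p_def GS_def)
    have sq: "sum_list p + d = int k" using q qe by (simp add: GS_def)
    have app: "air_path p" using ap by (simp add: air_path_snoc)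
    define j where "j = nat (sum_list p)"
    have sp: "sum_list p = int j" using air_path_sum_nonneg[OF app] by (simp add: j_def)
    have jn: "j \<le> n" using air_path_sum_le[OF app] lp sp by simp
    have kj: "k < j" using sq sp d0 by simp
    have pne: "p \<noteq> []" using kj sp by auto
    have "last p = 1 \<or> last p \<le> -1" using air_path_elem[OF app, of "last p"] pne by simp
    hence "last p = 1" using ap pne d0 by (auto simp: air_path_snoc)
    hence "p \<in> FS j n" using app lp sp by (simp add: FS_def)
    moreover have "d = int k - int j" using sq sp by simp
    ultimately show "q \<in> (\<Union>j\<in>{k<..n+2}. (\<lambda>p. p @ [int k - int j]) ` FS j n)"
      using qe kj jn by force
  qed
next
  show "(\<Union>j\<in>{k<..n+2}. (\<lambda>p. p @ [int k - int j]) ` FS j n) \<subseteq> GS k (Suc n)"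
  proof
    fix q assume "q \<in> (\<Union>j\<in>{k<..n+2}. (\<lambda>p. p @ [int k - int j]) ` FS j n)"
    then obtain j p where j: "k < j" and p: "p \<in> FS j n" and qe: "q = p @ [int k - int j]" by auto
    have "air_path q" using p j unfolding qe by (auto simp: FS_def air_path_snoc)
    thus "q \<in> GS k (Suc n)" using p j qe by (auto simp: FS_def GS_def)
  qed
qed

lemma card_GS1: "card (GS k (Suc n)) = (\<Sum>j\<in>{k<..n+2}. card (FS j n))"
proof -
  have "card (GS k (Suc n)) = card (\<Union>j\<in>{k<..n+2}. (\<lambda>p. p @ [int k - int j]) ` FS j n)"
    by (simp only: GS1)
  also have "\<dots> =
        (\<Sum>j\<in>{k<..n+2}. card ((\<lambda>p. p @ [int k - int j]) ` FS j n))"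
    by (rule card_UN_disjoint) (auto simp: fin_FS)
  also have "\<dots> = (\<Sum>j\<in>{k<..n+2}. card (FS j n))"
  proof (rule sum.cong)
    fix j
    have "inj_on (\<lambda>p. p @ [int k - int j]) (FS j n)" by (auto intro: inj_onI)
    thus "card ((\<lambda>p. p @ [int k - int j]) ` FS j n) = card (FS j n)" by (rule card_image)
  qed simp
  finally show ?thesis .
qed



lemma disc0: "fps_nth disc 0 = 1"
  by (simp add: disc_def)

lemma sqrt_disc_prop: "fps_nth sqrt_disc 0 = 1 \<and> sqrt_disc ^ 2 = disc"
proof -
  define R where "R = fps_radical (\<lambda>k x. 1) 2 disc"
  have R0: "fps_nth R 0 = 1" by (simp add: R_def)
  have R2: "R ^ 2 = disc"
    using power_radical[of disc "\<lambda>k x. 1" 1] disc0 by (simp add: R_def numeral_2_eq_2)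
  have uniq: "Q = R" if "fps_nth Q 0 = 1" "Q ^ 2 = disc" for Q
  proof -
    have "(Q - R) * (Q + R) = 0" using that R2 by (simp add: algebra_simps power2_eq_square)
    hence "Q - R = 0 \<or> Q + R = 0" by simp
    moreover have "Q + R \<noteq> 0"
    proof
      assume "Q + R = 0"
      hence "fps_nth (Q + R) 0 = 0" by simp
      thus False using that R0 by simp
    qed
    ultimately show ?thesis by auto
  qed
  have "sqrt_disc = R" unfolding sqrt_disc_def
  proof (rule the_equality)
    show "fps_nth R 0 = 1 \<and> R ^ 2 = disc" using R0 R2 by blast
    fix Q assume "fps_nth Q 0 = 1 \<and> Q ^ 2 = disc"
    thus "Q = R" using uniq by blast
  qed
  thus ?thesis using R0 R2 by simp
qed

lemma s2_times: "2 * fps_X * s2 = 1 + fps_X - fps_X ^ 2 - sqrt_disc"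
proof -
  define N where "N = 1 + fps_X - fps_X ^ 2 - sqrt_disc"
  have N0: "fps_nth N 0 = 0" using sqrt_disc_prop by (simp add: N_def)
  have g: "(2 * fps_X :: real fps) \<noteq> 0" by (metis fps_X_neq_zero mult_eq_0_iff zero_neq_numeral)
  have sg: "subdegree (2 * fps_X :: real fps) = 1"
    by (rule subdegreeI) auto
  have "N / (2 * fps_X) * (2 * fps_X) = N"
  proof (cases "N = 0")
    case False
    have "subdegree N \<ge> 1" using N0 False
      by (intro subdegree_geI) auto
    thus ?thesis using fps_times_divide_eq[OF g, of N] sg by simp
  qed simp
  thus ?thesis unfolding s2_def N_def by (simp add: mult.commute)
qed

lemma s2_quad: "fps_X * s2 ^ 2 - (1 + fps_X - fps_X ^ 2) * s2 + 1 = 0"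
proof -
  define P :: "real fps" where "P = 1 + fps_X - fps_X ^ 2"
  have Q: "sqrt_disc = P - 2 * fps_X * s2" using s2_times by (simp add: P_def)
  have "disc = P ^ 2 - 4 * fps_X" unfolding disc_def P_def by algebra
  moreover have "sqrt_disc ^ 2 = disc" using sqrt_disc_prop by simp
  ultimately have "(P - 2 * fps_X * s2) ^ 2 = P ^ 2 - 4 * fps_X" using Q by simp
  hence "4 * fps_X * (fps_X * s2 ^ 2 - P * s2 + 1) = 0"
    by algebra
  hence "fps_X * s2 ^ 2 - P * s2 + 1 = 0"
    by (metis fps_X_neq_zero mult_eq_0_iff zero_neq_numeral)
  thus ?thesis by (simp add: P_def)
qed

definition aa :: "nat \<Rightarrow> real fps" where "aa k = fps_X ^ k * s2 ^ k"
definition bb :: "nat \<Rightarrow> real fps" where "bb k = fps_X ^ k * (s2 ^ (k + 1) - s2 ^ k)"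

lemma tele: "bb j - bb (Suc j) = fps_X * aa (Suc j)"
proof -
  have "bb j - bb (Suc j) = fps_X ^ j * s2 ^ j * (s2 - 1 - fps_X * s2^2 + fps_X * s2)"
    unfolding bb_def by (simp add: power2_eq_square) algebra
  also have "s2 - 1 - fps_X * s2^2 + fps_X * s2 = fps_X ^ 2 * s2"
    using s2_quad by algebra
  finally show ?thesis unfolding aa_def by (simp add: power2_eq_square)
qed

lemma bb_sum: "k \<le> N \<Longrightarrow> bb k = bb N + fps_X * (\<Sum>j\<in>{k<..N}. aa j)"
proof (induction N rule: dec_induct)
  case base then show ?case by simp
next
  case (step N)
  have "{k<..Suc N} = insert (Suc N) {k<..N}" using step by auto
  hence "(\<Sum>j\<in>{k<..Suc N}. aa j) = aa (Suc N) + (\<Sum>j\<in>{k<..N}. aa j)" by simp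
  have "bb N = bb (Suc N) + fps_X * aa (Suc N)" using tele[of N] by (simp add: algebra_simps)
  with step.IH show ?case unfolding \<open>(\<Sum>j\<in>{k<..Suc N}. aa j) = aa (Suc N) + (\<Sum>j\<in>{k<..N}. aa j)\<close>
    by (simp add: distrib_left add.assoc)
qed

lemma aa_nth: "fps_nth (aa j) n = 0" if "n < j"
  using that by (simp add: aa_def fps_X_power_mult_nth mult.assoc)

lemma bb_nth_le: "fps_nth (bb j) n = 0" if "n < j"
  using that by (simp add: bb_def fps_X_power_mult_nth)

lemma A0: "fps_nth (aa 0) n = (if n = 0 then 1 else 0)" by (simp add: aa_def)
lemma A1: "fps_nth (aa (Suc k)) 0 = 0" by (simp add: aa_def)
lemma A2: "fps_nth (aa (Suc k)) (Suc n) = fps_nth (aa k) n + fps_nth (bb k) n"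
proof -
  have "aa (Suc k) = fps_X * (aa k + bb k)" by (simp add: aa_def bb_def algebra_simps)
  thus ?thesis by simp
qed
lemma B0: "fps_nth (bb k) 0 = 0"
  using bb_sum[of k "Suc k"] bb_nth_le[of 0 "Suc k"] by simp
lemma B1: "fps_nth (bb k) (Suc n) = (\<Sum>j\<in>{k<..n+2}. fps_nth (aa j) n)"
proof (cases "k \<le> n + 2")
  case True
  have "fps_nth (bb k) (Suc n) = fps_nth (bb (n+2)) (Suc n) + fps_nth (fps_X * (\<Sum>j\<in>{k<..n+2}. aa j)) (Suc n)"
    using arg_cong[OF bb_sum[OF True], of "\<lambda>f. fps_nth f (Suc n)"] by (simp only: fps_add_nth)
  also have "fps_nth (bb (n+2)) (Suc n) = 0" by (rule bb_nth_le) simp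
  also have "fps_nth (fps_X * (\<Sum>j\<in>{k<..n+2}. aa j)) (Suc n) = fps_nth (\<Sum>j\<in>{k<..n+2}. aa j) n"
    by (simp only: fps_X_mult_nth) simp
  finally show ?thesis by (simp only: fps_sum_nth add_0)
next
  case False
  thus ?thesis using bb_nth_le[of "Suc n" k] by simp
qed


lemma f_nth: "fps_nth (f_gf k) n = real (card (FS k n))" by (simp add: f_gf_def FS_def)
lemma g_nth: "fps_nth (g_gf k) n = real (card (GS k n))" by (simp add: g_gf_def GS_def)
lemma all_nth: "fps_nth (all_gf k) n = real (card (AS k n))" by (simp add: all_gf_def AS_def)

lemma main_nth: "\<forall>k. fps_nth (f_gf k) n = fps_nth (aa k) n \<and> fps_nth (g_gf k) n = fps_nth (bb k) n"
proof (induction n)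
  case 0
  show ?case
  proof
    fix k
    have "fps_nth (f_gf k) 0 = fps_nth (aa k) 0"
    proof (cases k)
      case 0 thus ?thesis by (simp add: f_nth FS0 A0)
    next
      case (Suc k') thus ?thesis by (simp add: f_nth FS1 A1)
    qed
    moreover have "fps_nth (g_gf k) 0 = fps_nth (bb k) 0" by (simp add: g_nth GS0 B0)
    ultimately show "fps_nth (f_gf k) 0 = fps_nth (aa k) 0 \<and> fps_nth (g_gf k) 0 = fps_nth (bb k) 0" ..
  qed
next
  case (Suc n)
  show ?case
  proof
    fix k
    have "fps_nth (f_gf k) (Suc n) = fps_nth (aa k) (Suc n)"
    proof (cases k)
      case 0 thus ?thesis by (simp add: f_nth FS0 A0)
    next
      case (Suc k')
      have "fps_nth (f_gf k) (Suc n) = real (card (FS k' n)) + real (card (GS k' n))"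
        using Suc by (simp add: f_nth card_FS2)
      also have "\<dots> = fps_nth (aa k') n + fps_nth (bb k') n"
        using Suc.IH by (simp add: f_nth g_nth)
      also have "\<dots> = fps_nth (aa k) (Suc n)" using Suc by (simp add: A2)
      finally show ?thesis .
    qed
    moreover have "fps_nth (g_gf k) (Suc n) = fps_nth (bb k) (Suc n)"
    proof -
      have "fps_nth (g_gf k) (Suc n) = (\<Sum>j\<in>{k<..n+2}. real (card (FS j n)))"
        by (simp add: g_nth card_GS1)
      also have "\<dots> = (\<Sum>j\<in>{k<..n+2}. fps_nth (aa j) n)"
        using Suc.IH by (simp add: f_nth)
      also have "\<dots> = fps_nth (bb k) (Suc n)" by (simp add: B1)
      finally show ?thesis .
    qed
    ultimately show "fps_nth (f_gf k) (Suc n) = fps_nth (aa k) (Suc n) \<and> fps_nth (g_gf k) (Suc n) = fps_nth (bb k) (Suc n)" ..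
  qed
qed

theorem theorem1:
  shows "\<forall>k::nat. f_gf k = fps_X ^ k * s2 ^ k \<and>
                  g_gf k = fps_X ^ k * (s2 ^ (k + 1) - s2 ^ k) \<and>
                  all_gf k = f_gf k + g_gf k \<and>
                  f_gf k + g_gf k = fps_X ^ k * s2 ^ (k + 1)"
proof
  fix k :: nat
  have F: "f_gf k = aa k" by (rule fps_ext) (use main_nth in blast)
  have G: "g_gf k = bb k" by (rule fps_ext) (use main_nth in blast)
  have A: "all_gf k = f_gf k + g_gf k"
    by (rule fps_ext) (simp add: all_nth f_nth g_nth AS_split)
  have S: "aa k + bb k = fps_X ^ k * s2 ^ (k + 1)" by (simp add: aa_def bb_def algebra_simps)
  show "f_gf k = fps_X ^ k * s2 ^ k \<and>
                  g_gf k = fps_X ^ k * (s2 ^ (k + 1) - s2 ^ k) \<and>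
                  all_gf k = f_gf k + g_gf k \<and>
                  f_gf k + g_gf k = fps_X ^ k * s2 ^ (k + 1)"
    using F G A S by (simp add: aa_def bb_def)
qed

end
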